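(* Fix an integer $\alpha\ge2$, an integer $\Delta\ge3$, and parameters $\beta_\mu>\beta_\nu\ge\frac{\Delta-2}{\Delta}$ with $(\beta_\nu/\beta_\mu)^\alpha\beta_\mu<\frac{\Delta-2}{\Delta}$. There exists a constant $C'=C'(\Delta,\alpha,\beta_\nu,\beta_\mu)$ such that for every $\Delta$-regular graph $G=(V,E)$, with $\nu,\mu$ the Gibbs distributions of $(G,\beta_\nu)$ and $(G,\beta_\mu)$, $$\frac1{C'}\sum_{\sigma\in\{-1,+1\}^V}\mu(\sigma)\left(\frac{\nu(\sigma)}{\mu(\sigma)}+1\right)^\alpha\ \le\ D_{\chi^\alpha}(\nu\|\mu)\ \le\ C'\sum_{\sigma\in\{-1,+1\}^V}\mu(\sigma)\left(\frac{\nu(\sigma)}{\mu(\sigma)}+1\right)^\alpha.$$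
   Context: For a graph $G=(V,E)$ and $\gamma>0$, the Ising model $(G,\gamma)$ has Gibbs distribution on $\{-1,+1\}^V$ given by $\pi(\sigma)\propto\gamma^{m(\sigma)}$, where $m(\sigma)=|\{\{u,v\}\in E:\sigma_u=\sigma_v\}|$. The $\chi^\alpha$-divergence is $D_{\chi^\alpha}(\nu\|\mu)=\sum_\sigma\mu(\sigma)\cdot\frac12\left|\frac{\nu(\sigma)}{\mu(\sigma)}-1\right|^\alpha$. *)

theory Defs
  imports Main "HOL-Library.FuncSet" Complex_Main
begin

definition simple_graph :: "nat set \<Rightarrow> nat set set \<Rightarrow> bool" where
  "simple_graph V E \<longleftrightarrow> finite V \<and> (\<forall>e\<in>E. e \<subseteq> V \<and> card e = 2)"

definition regular_graph :: "nat \<Rightarrow> nat set \<Rightarrow> nat set set \<Rightarrow> bool" where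
  "regular_graph \<Delta> V E \<longleftrightarrow> simple_graph V E \<and> (\<forall>v\<in>V. card {e\<in>E. v \<in> e} = \<Delta>)"

definition spins :: "nat set \<Rightarrow> (nat \<Rightarrow> int) set" where
  "spins V = (V \<rightarrow>\<^sub>E {-1, 1})"

definition mono_edges :: "nat set set \<Rightarrow> (nat \<Rightarrow> int) \<Rightarrow> nat" where
  "mono_edges E \<sigma> = card {e\<in>E. \<exists>u v. e = {u, v} \<and> \<sigma> u = \<sigma> v}"

definition ising_weight :: "nat set set \<Rightarrow> real \<Rightarrow> (nat \<Rightarrow> int) \<Rightarrow> real" where
  "ising_weight E \<gamma> \<sigma> = \<gamma> ^ mono_edges E \<sigma>"

definition ising_gibbs :: "nat set \<Rightarrow> nat set set \<Rightarrow> real \<Rightarrow> (nat \<Rightarrow> int) \<Rightarrow> real" where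
  "ising_gibbs V E \<gamma> \<sigma> =
     ising_weight E \<gamma> \<sigma> / (\<Sum>\<tau>\<in>spins V. ising_weight E \<gamma> \<tau>)"

definition chi_alpha_div :: "nat \<Rightarrow> 'b set \<Rightarrow> ('b \<Rightarrow> real) \<Rightarrow> ('b \<Rightarrow> real) \<Rightarrow> real" where
  "chi_alpha_div \<alpha> \<Omega> \<nu> \<mu> = (\<Sum>\<sigma>\<in>\<Omega>. \<mu> \<sigma> * (1/2) * \<bar>\<nu> \<sigma> / \<mu> \<sigma> - 1\<bar> ^ \<alpha>)"

end

theory Submission imports Defs begin

definition flip :: "nat \<Rightarrow> (nat \<Rightarrow> int) \<Rightarrow> (nat \<Rightarrow> int)" where
  "flip v \<sigma> = \<sigma>(v := - \<sigma> v)"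

definition Mo :: "nat set set \<Rightarrow> (nat \<Rightarrow> int) \<Rightarrow> nat set set" where
  "Mo E \<sigma> = {e\<in>E. \<exists>u v. e = {u, v} \<and> \<sigma> u = \<sigma> v}"

lemma mono_Mo: "mono_edges E \<sigma> = card (Mo E \<sigma>)"
  by (simp add: mono_edges_def Mo_def)

lemma card2E: "card e = 2 \<Longrightarrow> \<exists>a b. e = {a,b} \<and> a \<noteq> b"
  using card_2_iff by blast

lemma Mo_sub: "Mo E \<sigma> \<subseteq> E"
  unfolding Mo_def by auto

lemma mo_iff:
  assumes "card e = 2"
  shows "(\<exists>a b. e = {a,b} \<and> \<sigma> a = \<sigma> b) \<longleftrightarrow> (\<forall>x\<in>e. \<forall>y\<in>e. \<sigma> x = \<sigma> y)"
proof -
  obtain a b where e: "e = {a,b}" "a \<noteq> b" using card2E[OF assms] by (elim exE conjE)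
  show ?thesis
  proof
    assume "\<exists>a b. e = {a,b} \<and> \<sigma> a = \<sigma> b"
    then obtain c d where cd: "e = {c,d}" "\<sigma> c = \<sigma> d" by (elim exE conjE)
    show "\<forall>x\<in>e. \<forall>y\<in>e. \<sigma> x = \<sigma> y" unfolding cd(1) using cd(2) by simp
  next
    assume h: "\<forall>x\<in>e. \<forall>y\<in>e. \<sigma> x = \<sigma> y"
    have ae: "a \<in> e" and be: "b \<in> e" unfolding e(1) by simp_all
    have h2: "\<forall>y\<in>e. \<sigma> a = \<sigma> y" using h ae by (rule bspec)
    have "\<sigma> a = \<sigma> b" using h2 be by (rule bspec)
    then have "e = {a,b} \<and> \<sigma> a = \<sigma> b" using e(1) by (intro conjI)
    then show "\<exists>a b. e = {a,b} \<and> \<sigma> a = \<sigma> b" by (intro exI)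
  qed
qed

lemma flip_spins: "\<sigma> \<in> spins V \<Longrightarrow> v \<in> V \<Longrightarrow> flip v \<sigma> \<in> spins V"
  unfolding spins_def flip_def by (simp add: PiE_iff extensional_def) fastforce

lemma flip_flip[simp]: "flip v (flip v \<sigma>) = \<sigma>"
  by (auto simp: flip_def)

lemma sum_flip:
  assumes "v \<in> V"
  shows "(\<Sum>\<sigma>\<in>spins V. h (flip v \<sigma>)) = (\<Sum>\<sigma>\<in>spins V. (h \<sigma> :: real))"
  by (rule sum.reindex_bij_witness[where i="flip v" and j="flip v"])
     (auto simp: flip_spins assms)

lemma spin_val: "\<sigma> \<in> spins V \<Longrightarrow> x \<in> V \<Longrightarrow> \<sigma> x = -1 \<or> \<sigma> x = 1"
  unfolding spins_def by (simp add: PiE_iff)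

lemma F1:
  assumes "simple_graph V E" "e \<in> E" "v \<notin> e"
  shows "(e \<in> Mo E (flip v \<sigma>)) = (e \<in> Mo E \<sigma>)"
proof -
  have c: "card e = 2" using assms unfolding simple_graph_def by auto
  have "\<forall>x\<in>e. flip v \<sigma> x = \<sigma> x" using assms(3) by (auto simp: flip_def)
  then show ?thesis using assms(2) mo_iff[OF c, of "flip v \<sigma>"] mo_iff[OF c, of \<sigma>]
    unfolding Mo_def by auto
qed

lemma F2:
  assumes "simple_graph V E" "e \<in> E" "v \<in> e" "\<sigma> \<in> spins V"
  shows "(e \<in> Mo E (flip v \<sigma>)) = (e \<notin> Mo E \<sigma>)"
proof -
  have c: "card e = 2" and sub: "e \<subseteq> V" using assms unfolding simple_graph_def by auto
  obtain a b where ab: "e = {a,b}" "a \<noteq> b" using card2E[OF c] by (elim exE conjE)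
  have "\<exists>w. e = {v,w} \<and> w \<noteq> v"
  proof (cases "v = a")
    case True then show ?thesis using ab by (intro exI[of _ b]) auto
  next
    case False then have "v = b" using assms(3) ab by simp
    then show ?thesis using ab by (intro exI[of _ a]) auto
  qed
  then obtain w where w: "e = {v,w}" "w \<noteq> v" by (elim exE conjE)
  have vV: "v \<in> V" and wV: "w \<in> V" using sub w by auto
  have 1: "(e \<in> Mo E \<sigma>) = (\<sigma> v = \<sigma> w)"
    using assms(2) mo_iff[OF c, of \<sigma>] w unfolding Mo_def by auto
  have 2: "(e \<in> Mo E (flip v \<sigma>)) = (- \<sigma> v = \<sigma> w)"
    using assms(2) mo_iff[OF c, of "flip v \<sigma>"] w unfolding Mo_def by (auto simp: flip_def)
  show ?thesis unfolding 1 2 using spin_val[OF assms(4) vV] spin_val[OF assms(4) wV] by auto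
qed

lemma card_split: "finite A \<Longrightarrow> card A = card (A \<inter> B) + card (A - B)"
  by (metis Int_Diff_Un Int_Diff_disjoint card_Un_disjoint finite_Diff finite_Int)

lemma finE: "simple_graph V E \<Longrightarrow> finite E"
  unfolding simple_graph_def by (meson Pow_iff finite_Pow_iff finite_subset subsetI)

lemma D1:
  assumes "regular_graph d V E" "v \<in> V" "\<sigma> \<in> spins V"
  shows "int (card (Mo E (flip v \<sigma>))) = int (card (Mo E \<sigma>)) + int d
            - 2 * int (card (Mo E \<sigma> \<inter> {e\<in>E. v \<in> e}))"
proof -
  let ?Ev = "{e\<in>E. v \<in> e}"
  have sg: "simple_graph V E" and deg: "card ?Ev = d" using assms unfolding regular_graph_def by auto
  have fE: "finite E" using finE[OF sg] .
  have fM: "finite (Mo E \<tau>)" for \<tau> using fE unfolding Mo_def by auto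
  have fEv: "finite ?Ev" using fE by auto
  have a: "Mo E (flip v \<sigma>) \<inter> ?Ev = ?Ev - Mo E \<sigma>"
  proof (rule set_eqI)
    fix e show "e \<in> Mo E (flip v \<sigma>) \<inter> ?Ev \<longleftrightarrow> e \<in> ?Ev - Mo E \<sigma>"
      using F2[OF sg _ _ assms(3), of e v] by auto
  qed
  have b: "Mo E (flip v \<sigma>) - ?Ev = Mo E \<sigma> - ?Ev"
  proof (rule set_eqI)
    fix e show "e \<in> Mo E (flip v \<sigma>) - ?Ev \<longleftrightarrow> e \<in> Mo E \<sigma> - ?Ev"
      using F1[OF sg, of e v \<sigma>] Mo_sub[of E \<sigma>] Mo_sub[of E "flip v \<sigma>"] by auto
  qed
  have "card (Mo E (flip v \<sigma>)) = card (?Ev - Mo E \<sigma>) + card (Mo E \<sigma> - ?Ev)"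
    using card_split[OF fM, of "flip v \<sigma>" ?Ev] a b by simp
  moreover have "card ?Ev = card (?Ev \<inter> Mo E \<sigma>) + card (?Ev - Mo E \<sigma>)"
    using card_split[OF fEv] by blast
  moreover have "card (Mo E \<sigma>) = card (Mo E \<sigma> \<inter> ?Ev) + card (Mo E \<sigma> - ?Ev)"
    using card_split[OF fM] by blast
  moreover have "?Ev \<inter> Mo E \<sigma> = Mo E \<sigma> \<inter> ?Ev" by blast
  ultimately show ?thesis using deg by simp
qed

lemma Mv_le:
  assumes "regular_graph d V E" "v \<in> V"
  shows "card (Mo E \<sigma> \<inter> {e\<in>E. v \<in> e}) \<le> d"
proof -
  have sg: "simple_graph V E" and deg: "card {e\<in>E. v \<in> e} = d" using assms unfolding regular_graph_def by auto
  have "finite {e\<in>E. v \<in> e}" using finE[OF sg] by auto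
  then show ?thesis using deg card_mono[of "{e\<in>E. v \<in> e}"] by (metis inf_le2)
qed

lemma F3:
  assumes "simple_graph V E" "{u,v} \<in> E" "u \<noteq> v" "\<sigma> \<in> spins V"
  shows "card (Mo E (flip u \<sigma>) \<inter> {e\<in>E. v \<in> e}) \<noteq> card (Mo E \<sigma> \<inter> {e\<in>E. v \<in> e})"
proof -
  let ?Ev = "{e\<in>E. v \<in> e}"
  let ?A = "Mo E \<sigma> \<inter> ?Ev" and ?B = "Mo E (flip u \<sigma>) \<inter> ?Ev"
  let ?e0 = "{u,v}"
  have fE: "finite E" using finE[OF assms(1)] .
  have fA: "finite ?A" "finite ?B" using fE unfolding Mo_def by auto
  have nu: "u \<notin> e" if "e \<in> ?Ev" "e \<noteq> ?e0" for e
  proof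
    assume "u \<in> e"
    have "card e = 2" using that assms(1) unfolding simple_graph_def by auto
    moreover have "{u,v} \<subseteq> e" using that \<open>u \<in> e\<close> by auto
    moreover have "card {u,v} = 2" using assms(3) by auto
    moreover have "finite e" using \<open>card e = 2\<close> card_ge_0_finite by force
    ultimately have "e = {u,v}" by (metis card_subset_eq)
    then show False using that by simp
  qed
  have eq: "?A - {?e0} = ?B - {?e0}"
  proof (rule set_eqI)
    fix e show "e \<in> ?A - {?e0} \<longleftrightarrow> e \<in> ?B - {?e0}"
    proof (cases "e \<in> ?Ev \<and> e \<noteq> ?e0")
      case True
      then show ?thesis using F1[OF assms(1) _ nu[of e], of \<sigma>] by auto
    qed auto
  qed
  have sw: "(?e0 \<in> ?B) = (?e0 \<notin> ?A)"
    using F2[OF assms(1) assms(2) _ assms(4), of u] assms(2) by auto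
  show ?thesis
  proof (cases "?e0 \<in> ?A")
    case True
    then have "card ?A = card (?A - {?e0}) + 1" using fA card.remove by fastforce
    moreover have "card ?B = card (?B - {?e0})" using True sw by simp
    ultimately show ?thesis using eq by simp
  next
    case False
    then have "card ?B = card (?B - {?e0}) + 1" using fA card.remove sw by fastforce
    moreover have "card ?A = card (?A - {?e0})" using False by simp
    ultimately show ?thesis using eq by simp
  qed
qed


lemma pow_ratio:
  fixes b :: real
  assumes "b > 0" "a \<le> c + k" "c \<le> a + k"
  shows "b ^ a \<le> (max b (1/b)) ^ k * b ^ c"
proof (cases "b \<ge> 1")
  case True
  have "b ^ a \<le> b ^ (c + k)" using True assms(2) by (intro power_increasing) auto
  also have "\<dots> = b ^ k * b ^ c" by (simp add: power_add)
  also have "\<dots> \<le> (max b (1/b)) ^ k * b ^ c"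
    using assms(1) by (intro mult_right_mono power_mono) auto
  finally show ?thesis .
next
  case False
  have "b ^ (a + k) \<le> b ^ c" using False assms(1,3) by (intro power_decreasing) auto
  then have "b ^ a * b ^ k \<le> b ^ c" by (simp add: power_add)
  then have "b ^ a \<le> b ^ c / b ^ k" using assms(1) by (simp add: field_simps)
  also have "\<dots> = (1/b) ^ k * b ^ c" by (simp add: field_simps power_divide)
  also have "\<dots> \<le> (max b (1/b)) ^ k * b ^ c"
    using assms(1) by (intro mult_right_mono power_mono) auto
  finally show ?thesis .
qed

lemma sep_lt:
  fixes c \<rho> :: real
  assumes "c > 0" "0 < \<rho>" "\<rho> < 1" "m1 < m2"
  shows "\<bar>c * \<rho> ^ m1 - 1\<bar> \<ge> (1 - \<rho>) / 4 \<or> \<bar>c * \<rho> ^ m2 - 1\<bar> \<ge> (1 - \<rho>) / 4"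
proof (rule ccontr)
  define \<delta> where "\<delta> = (1 - \<rho>) / 4"
  define x where "x = c * \<rho> ^ m1"
  define y where "y = c * \<rho> ^ m2"
  assume "\<not> ?thesis"
  then have ax: "\<bar>x - 1\<bar> < \<delta>" and ay: "\<bar>y - 1\<bar> < \<delta>" unfolding x_def y_def \<delta>_def by auto
  have hx: "x < 1 + \<delta>" using ax by (simp add: abs_less_iff)
  have hy: "y > 1 - \<delta>" using ay by (simp add: abs_less_iff)
  have "\<rho> ^ m2 = \<rho> ^ m1 * \<rho> ^ (m2 - m1)" using assms(4) by (simp flip: power_add)
  also have "\<rho> ^ (m2 - m1) \<le> \<rho>" using assms by (intro power_le_one_iff[THEN iffD2] order.refl | simp add: power_decreasing[of 1 "m2-m1" \<rho>, simplified])
  then have "\<rho> ^ m1 * \<rho> ^ (m2 - m1) \<le> \<rho> ^ m1 * \<rho>" using assms(2) by (intro mult_left_mono) auto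
  finally have "y \<le> \<rho> * x" unfolding x_def y_def using assms(1) by (simp add: mult_left_mono algebra_simps)
  also have "\<rho> * x < \<rho> * (1 + \<delta>)" using hx assms(2) by simp
  finally have "1 - \<delta> < \<rho> + \<rho> * \<delta>" using hy by (simp add: algebra_simps)
  moreover have "\<rho> * \<delta> \<le> \<delta>" using assms unfolding \<delta>_def by (simp add: mult_left_le_one_le)
  ultimately have "1 - \<delta> < \<rho> + \<delta>" by linarith
  moreover have "4 * \<delta> = 1 - \<rho>" unfolding \<delta>_def by simp
  ultimately show False using assms(3) by linarith
qed


lemma sep:
  fixes c \<rho> :: real
  assumes "c > 0" "0 < \<rho>" "\<rho> < 1" "m1 \<noteq> m2"
  shows "\<bar>c * \<rho> ^ m1 - 1\<bar> \<ge> (1 - \<rho>) / 4 \<or> \<bar>c * \<rho> ^ m2 - 1\<bar> \<ge> (1 - \<rho>) / 4"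
proof (cases "m1 < m2")
  case True then show ?thesis using sep_lt[OF assms(1-3)] by blast
next
  case False then have "m2 < m1" using assms(4) by simp
  then show ?thesis using sep_lt[OF assms(1-3)] by blast
qed

lemma spins_fin: "finite V \<Longrightarrow> finite (spins V)"
  unfolding spins_def by (intro finite_PiE) auto

lemma spins_ne: "spins V \<noteq> {}"
  unfolding spins_def by (simp add: PiE_eq_empty_iff)

lemma Z_pos:
  assumes "finite V" "b > 0"
  shows "(\<Sum>\<tau>\<in>spins V. ising_weight E b \<tau>) > 0"
  using assms spins_fin spins_ne
  by (intro sum_pos) (auto simp: ising_weight_def)

lemma key_sum:
  fixes bn bm :: real
  assumes reg: "regular_graph d V E" and Vne: "V \<noteq> {}" and dpos: "d > 0"
    and bn: "0 < bn" and bnm: "bn < bm"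
  shows "((1 - bn/bm)/4) ^ \<alpha> \<le> 4 * (max bm (1/bm)) ^ (2*d) *
     (\<Sum>\<sigma>\<in>spins V. ising_gibbs V E bm \<sigma> * \<bar>ising_gibbs V E bn \<sigma> / ising_gibbs V E bm \<sigma> - 1\<bar> ^ \<alpha>)"
proof -
  define \<rho> where "\<rho> = bn / bm"
  define \<delta> where "\<delta> = (1 - \<rho>) / 4"
  define K where "K = (max bm (1/bm)) ^ (2*d)"
  define \<mu> where "\<mu> = ising_gibbs V E bm"
  define \<nu> where "\<nu> = ising_gibbs V E bn"
  define Zn where "Zn = (\<Sum>\<tau>\<in>spins V. ising_weight E bn \<tau>)"
  define Zm where "Zm = (\<Sum>\<tau>\<in>spins V. ising_weight E bm \<tau>)"
  define h where "h = (\<lambda>\<sigma>. \<mu> \<sigma> * \<bar>\<nu> \<sigma> / \<mu> \<sigma> - 1\<bar> ^ \<alpha>)"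
  define m where "m = (\<lambda>\<sigma>. card (Mo E \<sigma>))"
  have bm: "bm > 0" using bn bnm by simp
  have sg: "simple_graph V E" using reg unfolding regular_graph_def by simp
  have finV: "finite V" using sg unfolding simple_graph_def by simp
  have finS: "finite (spins V)" using spins_fin[OF finV] .
  have Zn: "Zn > 0" unfolding Zn_def using Z_pos[OF finV bn] .
  have Zm: "Zm > 0" unfolding Zm_def using Z_pos[OF finV bm] .
  have rho: "0 < \<rho>" "\<rho> < 1" unfolding \<rho>_def using bn bnm bm by auto
  have delta: "\<delta> \<ge> 0" unfolding \<delta>_def using rho by simp
  have K1: "K \<ge> 0" unfolding K_def using bm by simp
  have mu_eq: "\<mu> \<sigma> = bm ^ m \<sigma> / Zm" for \<sigma>
    unfolding \<mu>_def m_def Zm_def ising_gibbs_def ising_weight_def mono_Mo ..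
  have nu_eq: "\<nu> \<sigma> = bn ^ m \<sigma> / Zn" for \<sigma>
    unfolding \<nu>_def m_def Zn_def ising_gibbs_def ising_weight_def mono_Mo ..
  have mu_pos: "\<mu> \<sigma> > 0" for \<sigma> unfolding mu_eq using bm Zm by simp
  have r_eq: "\<nu> \<sigma> / \<mu> \<sigma> = (Zm / Zn) * \<rho> ^ m \<sigma>" for \<sigma>
    unfolding mu_eq nu_eq \<rho>_def using bm Zm Zn by (simp add: field_simps power_divide)
  have hnn: "h \<sigma> \<ge> 0" for \<sigma> unfolding h_def using mu_pos[of \<sigma>] by simp
  have c0: "Zm / Zn > 0" using Zm Zn by simp
  have sepr: "\<bar>\<nu> \<tau>1 / \<mu> \<tau>1 - 1\<bar> \<ge> \<delta> \<or> \<bar>\<nu> \<tau>2 / \<mu> \<tau>2 - 1\<bar> \<ge> \<delta>" if "m \<tau>1 \<noteq> m \<tau>2" for \<tau>1 \<tau>2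
    unfolding r_eq \<delta>_def using sep[OF c0 rho that] .
  have mu_ratio: "\<mu> \<sigma> \<le> K * \<mu> \<tau>" if "m \<sigma> \<le> m \<tau> + 2*d" "m \<tau> \<le> m \<sigma> + 2*d" for \<sigma> \<tau>
  proof -
    have "bm ^ m \<sigma> \<le> K * bm ^ m \<tau>" unfolding K_def using pow_ratio[OF bm that] .
    then have "bm ^ m \<sigma> / Zm \<le> K * bm ^ m \<tau> / Zm" using Zm by (intro divide_right_mono) auto
    then show ?thesis unfolding mu_eq by simp
  qed
  obtain v where vV: "v \<in> V" using Vne by blast
  have degv: "card {e\<in>E. v \<in> e} = d" using reg vV unfolding regular_graph_def by simp
  then have "{e\<in>E. v \<in> e} \<noteq> {}" using dpos by (metis card.empty less_irrefl)
  then obtain e where eE: "e \<in> E" and ve: "v \<in> e" by blast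
  have ce: "card e = 2" and eV: "e \<subseteq> V" using sg eE unfolding simple_graph_def by auto
  obtain a b where ab: "e = {a,b}" "a \<noteq> b" using card2E[OF ce] by (elim exE conjE)
  have "\<exists>u. e = {u,v} \<and> u \<noteq> v"
  proof (cases "v = a")
    case True then show ?thesis using ab by (intro exI[of _ b]) auto
  next
    case False then have "v = b" using ve ab by simp
    then show ?thesis using ab by (intro exI[of _ a]) auto
  qed
  then obtain u where eu: "e = {u,v}" and uv: "u \<noteq> v" by (elim exE conjE)
  have uvE: "{u,v} \<in> E" using eE eu by simp
  have uV: "u \<in> V" using eV eu by simp
  have per: "\<delta> ^ \<alpha> * \<mu> \<sigma> \<le> K * (h \<sigma> + h (flip v \<sigma>) + h (flip u \<sigma>) + h (flip v (flip u \<sigma>)))"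
    if sS: "\<sigma> \<in> spins V" for \<sigma>
  proof -
    define \<sigma>1 where "\<sigma>1 = flip v \<sigma>"
    define \<sigma>2 where "\<sigma>2 = flip u \<sigma>"
    define \<sigma>3 where "\<sigma>3 = flip v \<sigma>2"
    have s2: "\<sigma>2 \<in> spins V" unfolding \<sigma>2_def using flip_spins[OF sS uV] .
    have d1: "int (m \<sigma>1) = int (m \<sigma>) + int d - 2 * int (card (Mo E \<sigma> \<inter> {e\<in>E. v \<in> e}))"
      unfolding m_def \<sigma>1_def using D1[OF reg vV sS] .
    have d2: "int (m \<sigma>2) = int (m \<sigma>) + int d - 2 * int (card (Mo E \<sigma> \<inter> {e\<in>E. u \<in> e}))"
      unfolding m_def \<sigma>2_def using D1[OF reg uV sS] .
    have d3: "int (m \<sigma>3) = int (m \<sigma>2) + int d - 2 * int (card (Mo E \<sigma>2 \<inter> {e\<in>E. v \<in> e}))"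
      unfolding m_def \<sigma>3_def using D1[OF reg vV s2] .
    have b1: "card (Mo E \<sigma> \<inter> {e\<in>E. v \<in> e}) \<le> d" using Mv_le[OF reg vV] .
    have b2: "card (Mo E \<sigma> \<inter> {e\<in>E. u \<in> e}) \<le> d" using Mv_le[OF reg uV] .
    have b3: "card (Mo E \<sigma>2 \<inter> {e\<in>E. v \<in> e}) \<le> d" using Mv_le[OF reg vV] .
    have f3: "card (Mo E \<sigma>2 \<inter> {e\<in>E. v \<in> e}) \<noteq> card (Mo E \<sigma> \<inter> {e\<in>E. v \<in> e})"
      unfolding \<sigma>2_def using F3[OF sg uvE uv sS] .
    have diff: "m \<sigma> \<noteq> m \<sigma>1 \<or> m \<sigma>2 \<noteq> m \<sigma>3" using d1 d3 f3 by linarith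
    have cl1: "m \<sigma> \<le> m \<sigma>1 + 2*d \<and> m \<sigma>1 \<le> m \<sigma> + 2*d" using d1 b1 by linarith
    have cl2: "m \<sigma> \<le> m \<sigma>2 + 2*d \<and> m \<sigma>2 \<le> m \<sigma> + 2*d" using d2 b2 by linarith
    have cl3: "m \<sigma> \<le> m \<sigma>3 + 2*d \<and> m \<sigma>3 \<le> m \<sigma> + 2*d" using d2 b2 d3 b3 by linarith
    have cl0: "m \<sigma> \<le> m \<sigma> + 2*d \<and> m \<sigma> \<le> m \<sigma> + 2*d" by simp
    have "\<exists>\<tau>. (\<tau> = \<sigma> \<or> \<tau> = \<sigma>1 \<or> \<tau> = \<sigma>2 \<or> \<tau> = \<sigma>3) \<and> \<bar>\<nu> \<tau> / \<mu> \<tau> - 1\<bar> \<ge> \<delta>"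
      using diff sepr by blast
    then obtain \<tau> where tau: "\<tau> = \<sigma> \<or> \<tau> = \<sigma>1 \<or> \<tau> = \<sigma>2 \<or> \<tau> = \<sigma>3"
      and big: "\<bar>\<nu> \<tau> / \<mu> \<tau> - 1\<bar> \<ge> \<delta>" by (elim exE conjE)
    have close: "m \<sigma> \<le> m \<tau> + 2*d \<and> m \<tau> \<le> m \<sigma> + 2*d" using tau cl0 cl1 cl2 cl3 by auto
    have muK: "\<mu> \<sigma> \<le> K * \<mu> \<tau>" using mu_ratio close by blast
    have "\<delta> ^ \<alpha> \<le> \<bar>\<nu> \<tau> / \<mu> \<tau> - 1\<bar> ^ \<alpha>" using big delta by (intro power_mono) auto
    then have "\<delta> ^ \<alpha> * \<mu> \<sigma> \<le> \<bar>\<nu> \<tau> / \<mu> \<tau> - 1\<bar> ^ \<alpha> * (K * \<mu> \<tau>)"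
      using muK mu_pos[of \<sigma>] delta by (intro mult_mono) auto
    also have "\<dots> = K * h \<tau>" unfolding h_def by simp
    also have "h \<tau> \<le> h \<sigma> + h \<sigma>1 + h \<sigma>2 + h \<sigma>3"
      using tau hnn[of \<sigma>] hnn[of \<sigma>1] hnn[of \<sigma>2] hnn[of \<sigma>3] by auto
    then have "K * h \<tau> \<le> K * (h \<sigma> + h \<sigma>1 + h \<sigma>2 + h \<sigma>3)" using K1 by (intro mult_left_mono)
    finally show ?thesis unfolding \<sigma>1_def \<sigma>2_def \<sigma>3_def .
  qed
  have sum_mu: "(\<Sum>\<sigma>\<in>spins V. \<mu> \<sigma>) = 1"
    unfolding \<mu>_def ising_gibbs_def Zm_def[symmetric] using Zm
    by (simp add: sum_divide_distrib[symmetric] Zm_def)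
  have "\<delta> ^ \<alpha> = (\<Sum>\<sigma>\<in>spins V. \<delta> ^ \<alpha> * \<mu> \<sigma>)" using sum_mu by (simp add: sum_distrib_left[symmetric])
  also have "\<dots> \<le> (\<Sum>\<sigma>\<in>spins V. K * (h \<sigma> + h (flip v \<sigma>) + h (flip u \<sigma>) + h (flip v (flip u \<sigma>))))"
    using per by (intro sum_mono) auto
  also have "\<dots> = K * ((\<Sum>\<sigma>\<in>spins V. h \<sigma>) + (\<Sum>\<sigma>\<in>spins V. h (flip v \<sigma>)) + (\<Sum>\<sigma>\<in>spins V. h (flip u \<sigma>))
      + (\<Sum>\<sigma>\<in>spins V. h (flip v (flip u \<sigma>))))"
    by (simp add: sum.distrib sum_distrib_left[symmetric])
  also have "(\<Sum>\<sigma>\<in>spins V. h (flip v (flip u \<sigma>))) = (\<Sum>\<sigma>\<in>spins V. h (flip v \<sigma>))"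
    using sum_flip[OF uV, of "\<lambda>\<tau>. h (flip v \<tau>)"] .
  also have "(\<Sum>\<sigma>\<in>spins V. h (flip v \<sigma>)) = (\<Sum>\<sigma>\<in>spins V. h \<sigma>)" using sum_flip[OF vV] .
  also have "(\<Sum>\<sigma>\<in>spins V. h (flip u \<sigma>)) = (\<Sum>\<sigma>\<in>spins V. h \<sigma>)" using sum_flip[OF uV] .
  finally have "\<delta> ^ \<alpha> \<le> 4 * K * (\<Sum>\<sigma>\<in>spins V. h \<sigma>)" by simp
  then show ?thesis unfolding \<delta>_def \<rho>_def K_def h_def \<mu>_def \<nu>_def .
qed


lemma gibbs_pos: "finite V \<Longrightarrow> b > 0 \<Longrightarrow> ising_gibbs V E b \<sigma> > 0"
  unfolding ising_gibbs_def using Z_pos[of V b E] by (simp add: ising_weight_def)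

lemma gibbs_sum1: "finite V \<Longrightarrow> b > 0 \<Longrightarrow> (\<Sum>\<sigma>\<in>spins V. ising_gibbs V E b \<sigma>) = 1"
  unfolding ising_gibbs_def using Z_pos[of V b E] by (simp add: sum_divide_distrib[symmetric])

lemma pt_upper:
  fixes r :: real assumes "r \<ge> 0"
  shows "(r + 1) ^ k \<le> 2 ^ k * \<bar>r - 1\<bar> ^ k + 4 ^ k"
proof (cases "r \<ge> 3")
  case True
  have "(r + 1) ^ k \<le> (2 * \<bar>r - 1\<bar>) ^ k" using True assms by (intro power_mono) auto
  also have "\<dots> = 2 ^ k * \<bar>r - 1\<bar> ^ k" by (simp add: power_mult_distrib)
  finally have "(r + 1) ^ k \<le> 2 ^ k * \<bar>r - 1\<bar> ^ k" .
  moreover have "(0::real) \<le> 4 ^ k" by simp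
  ultimately show ?thesis by linarith
next
  case False
  have "(r + 1) ^ k \<le> 4 ^ k" using False assms by (intro power_mono) auto
  moreover have "0 \<le> 2 ^ k * \<bar>r - 1\<bar> ^ k" by simp
  ultimately show ?thesis by linarith
qed

lemma pt_lower:
  fixes r :: real assumes "r \<ge> 0"
  shows "\<bar>r - 1\<bar> ^ k \<le> (r + 1) ^ k"
  using assms by (intro power_mono) auto

theorem corollary7p3:
  fixes \<alpha> \<Delta> :: nat and \<beta>\<^sub>\<nu> \<beta>\<^sub>\<mu> :: real
  assumes "\<alpha> \<ge> 2" and "\<Delta> \<ge> 3"
    and "\<beta>\<^sub>\<mu> > \<beta>\<^sub>\<nu>" and "\<beta>\<^sub>\<nu> \<ge> (real \<Delta> - 2) / real \<Delta>"
    and "(\<beta>\<^sub>\<nu> / \<beta>\<^sub>\<mu>) ^ \<alpha> * \<beta>\<^sub>\<mu> < (real \<Delta> - 2) / real \<Delta>"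
  shows "\<exists>C'>0. \<forall>V E. regular_graph \<Delta> V E \<and> V \<noteq> {} \<longrightarrow>
     (let \<nu> = ising_gibbs V E \<beta>\<^sub>\<nu>; \<mu> = ising_gibbs V E \<beta>\<^sub>\<mu>;
          S = (\<Sum>\<sigma>\<in>spins V. \<mu> \<sigma> * (\<nu> \<sigma> / \<mu> \<sigma> + 1) ^ \<alpha>)
      in (1 / C') * S \<le> chi_alpha_div \<alpha> (spins V) \<nu> \<mu> \<and>
         chi_alpha_div \<alpha> (spins V) \<nu> \<mu> \<le> C' * S)"
proof -
  define bn where "bn = \<beta>\<^sub>\<nu>"
  define bm where "bm = \<beta>\<^sub>\<mu>"
  have "(real \<Delta> - 2) / real \<Delta> > 0" using assms(2) by simp
  then have bn: "bn > 0" using assms(4) unfolding bn_def by linarith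
  have bnm: "bn < bm" using assms(3) unfolding bn_def bm_def by simp
  have bm: "bm > 0" using bn bnm by simp
  define \<delta>0 where "\<delta>0 = ((1 - bn/bm)/4) ^ \<alpha>"
  define K where "K = (max bm (1/bm)) ^ (2*\<Delta>)"
  have d0: "\<delta>0 > 0" unfolding \<delta>0_def using bn bnm bm by simp
  have Kp: "K > 0" unfolding K_def using bm by simp
  define L where "L = 4 * K / \<delta>0"
  have Lp: "L > 0" unfolding L_def using d0 Kp by simp
  define A where "A = 2 ^ \<alpha> + 4 ^ \<alpha> * L"
  have Ap: "A > 0" unfolding A_def using Lp by (intro add_pos_pos mult_pos_pos) auto
  define C where "C = 2 * A + 1"
  have Cp: "C > 0" using Ap unfolding C_def by simp
  show ?thesis
  proof (intro exI[of _ C] conjI allI impI)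
    show "C > 0" by (rule Cp)
    fix V E assume h: "regular_graph \<Delta> V E \<and> V \<noteq> {}"
    have reg: "regular_graph \<Delta> V E" and Vne: "V \<noteq> {}" using h by auto
    have finV: "finite V" using reg unfolding regular_graph_def simple_graph_def by simp
    define \<nu> where "\<nu> = ising_gibbs V E bn"
    define \<mu> where "\<mu> = ising_gibbs V E bm"
    define S where "S = (\<Sum>\<sigma>\<in>spins V. \<mu> \<sigma> * (\<nu> \<sigma> / \<mu> \<sigma> + 1) ^ \<alpha>)"
    define H where "H = (\<Sum>\<sigma>\<in>spins V. \<mu> \<sigma> * \<bar>\<nu> \<sigma> / \<mu> \<sigma> - 1\<bar> ^ \<alpha>)"
    have mup: "\<mu> \<sigma> > 0" for \<sigma> unfolding \<mu>_def using gibbs_pos[OF finV bm] .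
    have nup: "\<nu> \<sigma> > 0" for \<sigma> unfolding \<nu>_def using gibbs_pos[OF finV bn] .
    have r0: "\<nu> \<sigma> / \<mu> \<sigma> \<ge> 0" for \<sigma> using mup[of \<sigma>] nup[of \<sigma>] by simp
    have chi: "chi_alpha_div \<alpha> (spins V) \<nu> \<mu> = H / 2"
      unfolding chi_alpha_div_def H_def by (simp add: sum_divide_distrib)
    have key: "\<delta>0 \<le> 4 * K * H"
      using key_sum[OF reg Vne _ bn bnm, of \<alpha>] assms(2) unfolding \<delta>0_def K_def H_def \<mu>_def \<nu>_def by simp
    then have LH: "1 \<le> L * H" unfolding L_def using d0 by (simp add: field_simps)
    have H0: "H \<ge> 0" unfolding H_def using mup by (intro sum_nonneg) (simp add: less_imp_le)
    have "S \<le> (\<Sum>\<sigma>\<in>spins V. \<mu> \<sigma> * (2 ^ \<alpha> * \<bar>\<nu> \<sigma> / \<mu> \<sigma> - 1\<bar> ^ \<alpha> + 4 ^ \<alpha>))"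
      unfolding S_def using pt_upper[OF r0] mup by (intro sum_mono mult_left_mono) (auto simp: less_imp_le)
    also have "\<dots> = 2 ^ \<alpha> * H + 4 ^ \<alpha> * (\<Sum>\<sigma>\<in>spins V. \<mu> \<sigma>)"
      unfolding H_def by (simp add: algebra_simps sum.distrib sum_distrib_left sum_distrib_right)
    also have "(\<Sum>\<sigma>\<in>spins V. \<mu> \<sigma>) = 1" unfolding \<mu>_def using gibbs_sum1[OF finV bm] .
    also have "2 ^ \<alpha> * H + 4 ^ \<alpha> * 1 \<le> 2 ^ \<alpha> * H + 4 ^ \<alpha> * (L * H)"
      using LH by (intro add_left_mono mult_left_mono) auto
    also have "\<dots> = A * H" unfolding A_def by (simp add: algebra_simps)
    finally have SA: "S \<le> A * H" .
    have HS: "H \<le> S"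
      unfolding H_def S_def using pt_lower[OF r0] mup by (intro sum_mono mult_left_mono) (auto simp: less_imp_le)
    have S0: "S \<ge> 0" using H0 HS by simp
    have "(1 / C) * S \<le> H / 2"
    proof -
      have "S \<le> C * (H / 2)" using SA H0 Ap unfolding C_def by (simp add: algebra_simps)
      then show ?thesis using Cp by (simp add: field_simps)
    qed
    moreover have "H / 2 \<le> C * S"
    proof -
      have "C \<ge> 1" unfolding C_def using Ap by simp
      then have "S \<le> C * S" using S0 by (simp add: mult_le_cancel_right1)
      then show ?thesis using HS S0 by simp
    qed
    ultimately have fin: "(1 / C) * S \<le> chi_alpha_div \<alpha> (spins V) \<nu> \<mu> \<and>
         chi_alpha_div \<alpha> (spins V) \<nu> \<mu> \<le> C * S" unfolding chi by simp
    then show "let \<nu> = ising_gibbs V E \<beta>\<^sub>\<nu>; \<mu> = ising_gibbs V E \<beta>\<^sub>\<mu>;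
          S = (\<Sum>\<sigma>\<in>spins V. \<mu> \<sigma> * (\<nu> \<sigma> / \<mu> \<sigma> + 1) ^ \<alpha>)
      in (1 / C) * S \<le> chi_alpha_div \<alpha> (spins V) \<nu> \<mu> \<and>
         chi_alpha_div \<alpha> (spins V) \<nu> \<mu> \<le> C * S"
      unfolding Let_def S_def \<nu>_def \<mu>_def bn_def bm_def .
  qed
qed

end
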